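(* Let $\mathcal{P}$ be a probability distribution on $\mathcal{X}\times\mathbb{R}$, let $\mathsf{m}:\mathcal{X}\to\mathbb{R}$ and $\widehat{\mathsf{v}}:\mathcal{X}\to[0,\infty)$ be fixed measurable functions (e.g. built from a training set independent of the data below), and for $\delta\in[-1,\infty)$ let $\widehat{\mathsf{PI}}(x,\delta):=\big[\mathsf{m}(x)-\sqrt{(1+\delta)\widehat{\mathsf{v}}(x)},\ \mathsf{m}(x)+\sqrt{(1+\delta)\widehat{\mathsf{v}}(x)}\big]$. Let $g(\delta):=\mathbb{P}_{(\mathbf{x},\mathbf{y})\sim\mathcal{P}}[\mathbf{y}\notin\widehat{\mathsf{PI}}(\mathbf{x},\delta)]$. Suppose there are constants $\Delta,L>0$ with $g(\Delta)=0$ and $g$ differentiable on $[-1,\Delta]$ with $|g'(\delta)|<L$ there. Let $\alpha\in(0,1)$ and let $(x'_1,y'_1),\dots,(x'_m,y'_m)$ be i.i.d. from $\mathcal{P}$. Consider the procedure: initialize $\delta=-1$; while $\frac{1}{m}\sum_{j=1}^m\mathbb{1}[y'_j\notin\widehat{\mathsf{PI}}(x'_j,\delta)]>\frac34\alpha$, update $\delta\leftarrow\frac{\delta+\Delta}{2}$; return $\delta^\star(\alpha):=\delta$. If $$\sqrt{\frac{\log\big(\lceil\log_2(\tfrac{2L(\Delta+1)}{\alpha})\rceil+1\big)+10\log m}{m}}\le\frac14\alpha,$$ then with probability at least $1-2m^{-10}$ over $\{(x'_j,y'_j)\}_{j=1}^m$, $$\mathbb{P}_{(\mathbf{x},\mathbf{y})\sim\mathcal{P}}\big[\mathbf{y}\in\widehat{\mathsf{PI}}(\mathbf{x},\delta^\star(\alpha))\big]\ge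 1-\alpha.$$
   Context: The probability over $(\mathbf{x},\mathbf{y})$ is over a fresh draw independent of the calibration set, with $\mathsf{m}$ and $\widehat{\mathsf{v}}$ held fixed. *)

theory Defs
  imports "HOL-Probability.Probability"
begin

definition PI :: "('a \<Rightarrow> real) \<Rightarrow> ('a \<Rightarrow> real) \<Rightarrow> 'a \<Rightarrow> real \<Rightarrow> real set" where
  "PI mu v x \<delta> = {mu x - sqrt ((1 + \<delta>) * v x) .. mu x + sqrt ((1 + \<delta>) * v x)}"

definition miscov :: "('a \<times> real) measure \<Rightarrow> ('a \<Rightarrow> real) \<Rightarrow> ('a \<Rightarrow> real) \<Rightarrow> real \<Rightarrow> real" where
  "miscov M mu v \<delta> = measure M {p \<in> space M. snd p \<notin> PI mu v (fst p) \<delta>}"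

definition emp_miscov :: "('a \<Rightarrow> real) \<Rightarrow> ('a \<Rightarrow> real) \<Rightarrow> nat \<Rightarrow> (nat \<Rightarrow> 'a \<times> real) \<Rightarrow> real \<Rightarrow> real" where
  "emp_miscov mu v n \<omega> \<delta> =
     (\<Sum>j<n. if snd (\<omega> j) \<notin> PI mu v (fst (\<omega> j)) \<delta> then 1 else 0) / real n"

fun bisect_seq :: "real \<Rightarrow> nat \<Rightarrow> real" where
  "bisect_seq \<Delta> 0 = -1"
| "bisect_seq \<Delta> (Suc k) = (bisect_seq \<Delta> k + \<Delta>) / 2"

definition procedure_returns ::
  "('a \<Rightarrow> real) \<Rightarrow> ('a \<Rightarrow> real) \<Rightarrow> real \<Rightarrow> real \<Rightarrow> nat \<Rightarrow> (nat \<Rightarrow> 'a \<times> real) \<Rightarrow> real \<Rightarrow> bool" where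
  "procedure_returns mu v \<Delta> \<alpha> n \<omega> d \<longleftrightarrow>
     (\<exists>k. d = bisect_seq \<Delta> k
        \<and> emp_miscov mu v n \<omega> (bisect_seq \<Delta> k) \<le> 3 / 4 * \<alpha>
        \<and> (\<forall>i<k. emp_miscov mu v n \<omega> (bisect_seq \<Delta> i) > 3 / 4 * \<alpha>))"

end

theory Submission
  imports Defs
begin

lemma hoeff_PiM:
  assumes M: "prob_space M" and n: "n \<ge> 1" and f: "f \<in> borel_measurable M"
    and fb: "\<forall>x\<in>space M. f x \<in> {0..1}" and e: "(\<epsilon>::real) \<ge> 0"
  shows "measure (PiM {..<n} (\<lambda>_. M)) {\<omega> \<in> space (PiM {..<n} (\<lambda>_. M)).
            \<epsilon> \<le> \<bar>(\<Sum>i<n. f (\<omega> i)) - real n * integral\<^sup>L M f\<bar>} \<le> 2 * exp (-2*\<epsilon>\<^sup>2 / real n)"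
proof -
  let ?I = "{..<n::nat}"
  let ?P = "PiM ?I (\<lambda>_. M)"
  interpret M: prob_space M by fact
  interpret P: prob_space ?P by (rule prob_space_PiM) (simp add: M.prob_space_axioms)
  have I: "?I \<noteq> {}" proof - have "0 \<in> ?I" using n by simp thus ?thesis by blast qed
  have comp: "distr ?P M (\<lambda>\<omega>. \<omega> i) = M" if "i \<in> ?I" for i
    using that by (intro distr_PiM_component) (simp add: M.prob_space_axioms)
  have ind0: "P.indep_vars (\<lambda>_. M) (\<lambda>i \<omega>. \<omega> i) ?I"
  proof (subst P.indep_vars_iff_distr_eq_PiM'[OF I])
    show "(\<lambda>\<omega>. \<omega> i) \<in> measurable ?P M" if "i \<in> ?I" for i
      using that by measurable
    have "distr ?P (PiM ?I (\<lambda>_. M)) (\<lambda>x. \<lambda>i\<in>?I. x i) = distr ?P ?P (\<lambda>x. x)"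
      by (intro distr_cong) (auto simp: space_PiM)
    also have "\<dots> = ?P" by (rule distr_id2) simp
    also have "\<dots> = PiM ?I (\<lambda>i. distr ?P M (\<lambda>\<omega>. \<omega> i))"
      by (intro PiM_cong) (simp_all add: comp)
    finally show "distr ?P (PiM ?I (\<lambda>_. M)) (\<lambda>x. \<lambda>i\<in>?I. x i) = PiM ?I (\<lambda>i. distr ?P M (\<lambda>\<omega>. \<omega> i))" .
  qed
  have ind: "P.indep_vars (\<lambda>_. borel) (\<lambda>i \<omega>. f (\<omega> i)) ?I"
    by (rule P.indep_vars_compose2[OF ind0]) (use f in auto)
  have ex: "P.expectation (\<lambda>\<omega>. f (\<omega> i)) = integral\<^sup>L M f" if "i \<in> ?I" for i
  proof -
    have "integral\<^sup>L M f = integral\<^sup>L (distr ?P M (\<lambda>\<omega>. \<omega> i)) f" using comp[OF that] by simp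
    also have "\<dots> = P.expectation (\<lambda>\<omega>. f (\<omega> i))"
      by (rule integral_distr) (use that f in auto)
    finally show ?thesis by simp
  qed
  have sp: "\<omega> i \<in> space M" if "\<omega> \<in> space ?P" "i \<in> ?I" for \<omega> i
    using that by (auto simp: space_PiM)
  interpret H: Hoeffding_ineq ?P ?I "\<lambda>i \<omega>. f (\<omega> i)" "\<lambda>_. 0" "\<lambda>_. 1" "\<Sum>i\<in>?I. P.expectation (\<lambda>\<omega>. f (\<omega> i))"
  proof unfold_locales
    show "AE x in ?P. f (x i) \<in> {0..1}" if "i \<in> ?I" for i
      using fb sp[OF _ that] by (intro AE_I2) auto
  qed (use ind in auto)
  have "(\<Sum>i\<in>?I. P.expectation (\<lambda>\<omega>. f (\<omega> i))) = real n * integral\<^sup>L M f"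
    using ex by simp
  moreover have "(\<Sum>i\<in>?I. ((\<lambda>_. 1::real) i - (\<lambda>_. 0) i)\<^sup>2) = real n" by simp
  ultimately show ?thesis
    using H.Hoeffding_ineq_abs_ge[OF e] n by simp
qed

lemma pred_PI:
  assumes "sets M = sets (X \<Otimes>\<^sub>M borel)"
    and "mu \<in> borel_measurable X" and "v \<in> borel_measurable X"
  shows "Measurable.pred M (\<lambda>p. snd p \<in> PI mu v (fst p) d)"
proof -
  have "Measurable.pred (X \<Otimes>\<^sub>M borel) (\<lambda>p. snd p \<in> PI mu v (fst p) d)"
    unfolding PI_def atLeastAtMost_iff using assms(2,3) by measurable
  then show ?thesis using measurable_cong_sets[OF assms(1) refl] by (simp add: pred_def sets_eq_imp_space_eq[OF assms(1)] assms(1))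
qed


lemma bisect_gap: "\<Delta> - bisect_seq \<Delta> k = (\<Delta> + 1) / 2 ^ k"
  by (induction k) (auto simp: field_simps)

lemma bisect_range: "\<Delta> > -1 \<Longrightarrow> bisect_seq \<Delta> k \<in> {-1..\<Delta>}"
proof -
  assume a: "\<Delta> > -1"
  have "(\<Delta> + 1) / 2 ^ k \<le> \<Delta> + 1"
    using divide_left_mono[of 1 "2^k" "\<Delta>+1"] a by simp
  moreover have "(\<Delta> + 1) / 2 ^ k \<ge> 0" using a by simp
  ultimately show ?thesis using bisect_gap[of \<Delta> k] by auto
qed


theorem lemma1:
  fixes X :: "'a measure" and M :: "('a \<times> real) measure"
    and mu v :: "'a \<Rightarrow> real" and \<Delta> L \<alpha> :: real and n :: nat
  assumes "prob_space M"
    and "sets M = sets (X \<Otimes>\<^sub>M borel)"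
    and "mu \<in> borel_measurable X" and "v \<in> borel_measurable X"
    and "\<forall>x\<in>space X. v x \<ge> 0"
    and "\<Delta> > 0" and "L > 0"
    and "miscov M mu v \<Delta> = 0"
    and "\<forall>\<delta>\<in>{-1..\<Delta>}. \<exists>D. (miscov M mu v has_real_derivative D) (at \<delta> within {-1..\<Delta>}) \<and> \<bar>D\<bar> < L"
    and "0 < \<alpha>" and "\<alpha> < 1"
    and "n \<ge> 1"
    and "sqrt ((ln (real_of_int \<lceil>log 2 (2 * L * (\<Delta> + 1) / \<alpha>)\<rceil> + 1) + 10 * ln (real n)) / real n)
           \<le> \<alpha> / 4"
  shows "measure (PiM {..<n} (\<lambda>_. M))
           {\<omega> \<in> space (PiM {..<n} (\<lambda>_. M)).
              \<exists>d. procedure_returns mu v \<Delta> \<alpha> n \<omega> d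
                 \<and> measure M {p \<in> space M. snd p \<in> PI mu v (fst p) d} \<ge> 1 - \<alpha>}
         \<ge> 1 - 2 / real n ^ 10"
proof -
  note sM = assms(2) and muM = assms(3) and vM = assms(4)
  interpret M: prob_space M by fact
  let ?I = "{..<n::nat}"
  let ?P = "PiM ?I (\<lambda>_. M)"
  interpret P: prob_space ?P by (rule prob_space_PiM) (simp add: M.prob_space_axioms)
  define g where "g = miscov M mu v"
  define f where "f d p = (if snd p \<notin> PI mu v (fst p) d then 1 else 0 :: real)" for d p
  define B where "B d = {p \<in> space M. snd p \<notin> PI mu v (fst p) d}" for d
  define \<delta> where "\<delta> k = bisect_seq \<Delta> k" for k
  define emp where "emp \<omega> d = emp_miscov mu v n \<omega> d" for \<omega> d
  have predM: "Measurable.pred M (\<lambda>p. snd p \<in> PI mu v (fst p) d)" for d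
    by (rule pred_PI[OF sM muM vM])
  have fM[measurable]: "f d \<in> borel_measurable M" for d
    unfolding f_def using predM[of d] by measurable
  have B_sets: "B d \<in> sets M" for d
    unfolding B_def using predM[of d] by measurable
  have fB: "integral\<^sup>L M (f d) = g d" for d
  proof -
    have "integral\<^sup>L M (f d) = integral\<^sup>L M (indicator (B d))"
      by (intro Bochner_Integration.integral_cong refl) (auto simp: f_def B_def indicator_def)
    also have "\<dots> = measure M (B d)" using B_sets by (simp add: Int_absorb2 sets.sets_into_space)
    finally show ?thesis by (simp add: g_def miscov_def B_def)
  qed
  have cov: "measure M {p \<in> space M. snd p \<in> PI mu v (fst p) d} = 1 - g d" for d
  proof -
    have "{p \<in> space M. snd p \<in> PI mu v (fst p) d} = space M - B d" by (auto simp: B_def)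
    then show ?thesis using M.prob_compl[OF B_sets[of d]] by (simp add: g_def miscov_def B_def)
  qed
  have emp_eq: "emp \<omega> d = (\<Sum>i<n. f d (\<omega> i)) / real n" for \<omega> d
    by (simp add: emp_def emp_miscov_def f_def)
  have emp_meas[measurable]: "(\<lambda>\<omega>. emp \<omega> d) \<in> borel_measurable ?P" for d
    unfolding emp_eq by measurable
  have fb: "\<forall>x\<in>space M. f d x \<in> {0..1}" for d by (simp add: f_def)
  have n0: "real n > 0" using assms(12) by simp
  define x where "x = 2 * L * (\<Delta> + 1) / \<alpha>"
  define K where "K = \<lceil>log 2 x\<rceil>"
  define Kn where "Kn = nat K"
  have xpos: "x > 0" using assms(6,7,10) by (simp add: x_def)
  have mvt: "g d \<le> L * (\<Delta> - d)" if "d \<in> {-1..\<Delta>}" for d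
  proof -
    obtain D where D: "\<And>t. t \<in> {-1..\<Delta>} \<Longrightarrow> (g has_real_derivative D t) (at t within {-1..\<Delta>}) \<and> \<bar>D t\<bar> < L"
      using assms(9) unfolding g_def by metis
    have "norm (g d - g \<Delta>) \<le> L * norm (d - \<Delta>)"
      by (rule field_differentiable_bound[of "{-1..\<Delta>}" g D L])
         (use D that assms(6) in \<open>auto intro: less_imp_le\<close>)
    then show ?thesis using assms(8) that by (simp add: g_def)
  qed
  have gk: "g (\<delta> k) \<le> L * (\<Delta> + 1) / 2 ^ k" for k
    using mvt[of "\<delta> k"] bisect_range[of \<Delta> k] bisect_gap[of \<Delta> k] assms(6) by (simp add: \<delta>_def)
  have gKn: "g (\<delta> Kn) \<le> \<alpha> / 2"
  proof -
    have "log 2 x \<le> real Kn" unfolding Kn_def K_def by linarith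
    then have "2 powr log 2 x \<le> 2 powr real Kn" by simp
    then have "x \<le> 2 ^ Kn" using xpos by (simp add: powr_realpow)
    then have "L * (\<Delta> + 1) / 2 ^ Kn \<le> \<alpha> / 2"
      using assms(10) by (simp add: x_def field_simps)
    with gk[of Kn] show ?thesis by linarith
  qed
  define bad where "bad k = {\<omega> \<in> space ?P. real n * \<alpha> / 4 \<le> \<bar>(\<Sum>i<n. f (\<delta> k) (\<omega> i)) - real n * g (\<delta> k)\<bar>}" for k
  have bad_sets: "bad k \<in> P.events" for k unfolding bad_def by measurable
  have bad_prob: "P.prob (bad k) \<le> 2 * exp (- (real n * \<alpha>\<^sup>2 / 8))" for k
  proof -
    have "P.prob (bad k) \<le> 2 * exp (-2*(real n * \<alpha> / 4)\<^sup>2 / real n)"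
      using hoeff_PiM[OF assms(1,12) fM fb, of "real n * \<alpha> / 4" "\<delta> k"] assms(10)
      unfolding bad_def fB by simp
    also have "-2*(real n * \<alpha> / 4)\<^sup>2 / real n = - (real n * \<alpha>\<^sup>2 / 8)"
      using n0 by (simp add: power2_eq_square field_simps)
    finally show ?thesis .
  qed
  define N where "N = real Kn + 1"
  have union: "P.prob (\<Union>k\<in>{..Kn}. bad k) \<le> N * (2 * exp (- (real n * \<alpha>\<^sup>2 / 8)))"
  proof -
    have "P.prob (\<Union>k\<in>{..Kn}. bad k) \<le> (\<Sum>k\<in>{..Kn}. P.prob (bad k))"
      by (rule P.finite_measure_subadditive_finite) (auto simp: bad_sets)
    also have "\<dots> \<le> (\<Sum>k\<in>{..Kn}. 2 * exp (- (real n * \<alpha>\<^sup>2 / 8)))"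
      by (intro sum_mono bad_prob)
    finally show ?thesis by (simp add: N_def add.commute)
  qed
  have lnN: "ln N \<le> ln (real_of_int K + 1)"
  proof (cases "K \<ge> 0")
    case True then show ?thesis by (simp add: N_def Kn_def)
  next
    case False
    then have "real_of_int K + 1 \<le> 0" by linarith
    moreover have "ln (real_of_int K + 1) \<ge> 0"
    proof (cases "K + 1 = 0")
      case True then have "real_of_int K + 1 = 0" by (metis of_int_1 of_int_add of_int_0)
      then show ?thesis by simp
    next
      case F: False
      with \<open>\<not> K \<ge> 0\<close> have "real_of_int K + 1 \<le> -1" by linarith
      then have "ln (-(real_of_int K + 1)) \<ge> 0" by (intro ln_ge_zero) linarith
      then show ?thesis by (metis ln_minus)
    qed
    ultimately show ?thesis using False by (simp add: N_def Kn_def)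
  qed
  have hyp: "ln (real_of_int K + 1) + 10 * ln (real n) \<le> real n * \<alpha>\<^sup>2 / 16"
  proof -
    let ?a = "(ln (real_of_int K + 1) + 10 * ln (real n)) / real n"
    have "sqrt ?a \<le> \<alpha> / 4" using assms(13) by (simp add: K_def x_def)
    then have "?a \<le> (\<alpha>/4)\<^sup>2"
      using assms(10) by (metis real_le_rsqrt real_sqrt_le_iff sqrt_le_D)
    then show ?thesis using n0 by (simp add: field_simps power2_eq_square)
  qed
  have N1: "N \<ge> 1" by (simp add: N_def)
  have probbound: "N * (2 * exp (- (real n * \<alpha>\<^sup>2 / 8))) \<le> 2 / real n ^ 10"
  proof -
    have "- (real n * \<alpha>\<^sup>2 / 8) \<le> - (2 * ln N + 20 * ln (real n))"
      using hyp lnN by linarith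
    then have "exp (- (real n * \<alpha>\<^sup>2 / 8)) \<le> exp (- (2 * ln N + 20 * ln (real n)))" by simp
    also have "\<dots> = 1 / (N^2 * real n ^ 20)"
    proof -
      have pos: "N^2 * real n ^ 20 > 0" using N1 n0 by simp
      have "2 * ln N + 20 * ln (real n) = ln (N^2 * real n ^ 20)"
        using N1 n0 by (simp add: ln_mult ln_realpow)
      then have "exp (- (2 * ln N + 20 * ln (real n))) = exp (- ln (N^2 * real n ^ 20))" by simp
      also have "\<dots> = 1 / (N^2 * real n ^ 20)" using pos by (simp add: exp_minus exp_ln inverse_eq_divide)
      finally show ?thesis .
    qed
    finally have "N * (2 * exp (- (real n * \<alpha>\<^sup>2 / 8))) \<le> 2 / (N * real n ^ 20)"
      using N1 n0 by (simp add: field_simps power2_eq_square)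
    also have "\<dots> \<le> 2 / real n ^ 10"
    proof -
      have "real n ^ 10 \<le> real n ^ 20" using assms(12) by (intro power_increasing) auto
      also have "\<dots> \<le> N * real n ^ 20" using N1 n0 by simp
      finally show ?thesis using n0 N1 by (intro divide_left_mono) auto
    qed
    finally show ?thesis .
  qed
  define T where "T = {\<omega> \<in> space ?P. \<exists>d. procedure_returns mu v \<Delta> \<alpha> n \<omega> d
                 \<and> measure M {p \<in> space M. snd p \<in> PI mu v (fst p) d} \<ge> 1 - \<alpha>}"
  have T_eq: "T = {\<omega> \<in> space ?P. \<exists>k. emp \<omega> (\<delta> k) \<le> 3/4*\<alpha> \<and> (\<forall>i<k. emp \<omega> (\<delta> i) > 3/4*\<alpha>)
                 \<and> 1 - g (\<delta> k) \<ge> 1 - \<alpha>}"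
    unfolding T_def procedure_returns_def cov emp_def \<delta>_def by blast
  have T_sets: "T \<in> P.events" unfolding T_eq by measurable
  have sub: "space ?P - (\<Union>k\<in>{..Kn}. bad k) \<subseteq> T"
  proof
    fix \<omega> assume \<omega>: "\<omega> \<in> space ?P - (\<Union>k\<in>{..Kn}. bad k)"
    have dev: "\<bar>emp \<omega> (\<delta> k) - g (\<delta> k)\<bar> < \<alpha> / 4" if "k \<le> Kn" for k
    proof -
      have "\<bar>(\<Sum>i<n. f (\<delta> k) (\<omega> i)) - real n * g (\<delta> k)\<bar> < real n * \<alpha> / 4"
      proof -
        have "\<omega> \<notin> bad k" using \<omega> that by auto
        then show ?thesis using \<omega> unfolding bad_def by (simp add: not_le)
      qed
      then have "\<bar>((\<Sum>i<n. f (\<delta> k) (\<omega> i)) - real n * g (\<delta> k)) / real n\<bar> < \<alpha> / 4"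
        using n0 by (simp add: field_simps)
      moreover have "((\<Sum>i<n. f (\<delta> k) (\<omega> i)) - real n * g (\<delta> k)) / real n = emp \<omega> (\<delta> k) - g (\<delta> k)"
        using n0 by (simp add: emp_eq field_simps)
      ultimately show ?thesis by simp
    qed
    have ex: "emp \<omega> (\<delta> Kn) \<le> 3/4*\<alpha>" using dev[of Kn] gKn by linarith
    define k where "k = (LEAST k. emp \<omega> (\<delta> k) \<le> 3/4*\<alpha>)"
    have k1: "emp \<omega> (\<delta> k) \<le> 3/4*\<alpha>" unfolding k_def by (rule LeastI[of _ Kn]) (rule ex)
    have k2: "k \<le> Kn" unfolding k_def by (rule Least_le) (rule ex)
    have k3: "\<forall>i<k. emp \<omega> (\<delta> i) > 3/4*\<alpha>" using not_less_Least[of _ "\<lambda>k. emp \<omega> (\<delta> k) \<le> 3/4*\<alpha>"]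
      unfolding k_def by (meson not_le)
    have "g (\<delta> k) \<le> \<alpha>" using dev[OF k2] k1 by linarith
    then show "\<omega> \<in> T" unfolding T_eq using \<omega> k1 k3 by auto
  qed
  have "1 - 2 / real n ^ 10 \<le> 1 - P.prob (\<Union>k\<in>{..Kn}. bad k)"
    using union probbound by linarith
  also have "\<dots> = P.prob (space ?P - (\<Union>k\<in>{..Kn}. bad k))"
    by (rule P.prob_compl[symmetric]) (auto simp: bad_sets)
  also have "\<dots> \<le> P.prob T"
    by (rule P.finite_measure_mono[OF sub T_sets])
  finally show ?thesis unfolding T_def .
qed

end
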